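(* The Schubert cell $S_{w_0,z_2}$ is the disjoint union of exactly four $G$-orbits of points $(P,Pw_0,Pz_2n)$: $n=n(0,1,1)$, dimension $8$, trivial stabilizer; $n=n(0,0,1)$, dimension $7$, stabilizer $\{d(1/a^2,a,a):a\in\mathbb{R}^\times\}$; $n=n(0,1,0)$, dimension $7$, stabilizer $\{d(a,1/a^2,a):a\in\mathbb{R}^\times\}$; $n=n(0,0,0)$, dimension $6$, stabilizer $D$.
   Context: $G=\mathrm{SL}_3(\mathbb{R})$, $P$ the upper triangular matrices in $G$, $D$ the diagonal matrices in $G$; $G$ acts on $X=(P\backslash G)^3$ by right multiplication in each coordinate. $n(x,y,z)=\begin{pmatrix}1&x&y\\0&1&z\\0&0&1\end{pmatrix}$, $d(a,b,c)=\operatorname{diag}(a,b,c)$. $w_0=\begin{pmatrix}0&0&-1\\0&-1&0\\-1&0&0\end{pmatrix}$, $z_2=\begin{pmatrix}0&0&1\\-1&0&0\\0&-1&0\end{pmatrix}$. $S_{v,w}=\big(\{P\}\times P\backslash PvP\times P\backslash PwP\big)\cdot G$. The stabilizer of $(P,Pv,Pwn)$ is $P\cap v^{-1}Pv\cap (wn)^{-1}P(wn)$. *)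

theory Defs
  imports "HOL-Analysis.Analysis"
begin

type_synonym mat3 = "real^3^3"

text \<open>G = SL_3(R), P = upper triangular matrices in G, D = diagonal matrices in G.
  Rows/columns are indexed by 1,2,3 :: 3; entry (i,j) is A $ i $ j.\<close>

definition SL3 :: "mat3 set" where
  "SL3 = {A. det A = 1}"

definition Bor :: "mat3 set" where
  "Bor = {A \<in> SL3. A $ 2 $ 1 = 0 \<and> A $ 3 $ 1 = 0 \<and> A $ 3 $ 2 = 0}"

definition Diag :: "mat3 set" where
  "Diag = {A \<in> SL3. \<forall>i j. i \<noteq> j \<longrightarrow> A $ i $ j = 0}"

definition nmat :: "real \<Rightarrow> real \<Rightarrow> real \<Rightarrow> mat3" where
  "nmat x y z = vector [vector [1, x, y], vector [0, 1, z], vector [0, 0, 1]]"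

definition dmat :: "real \<Rightarrow> real \<Rightarrow> real \<Rightarrow> mat3" where
  "dmat a b c = vector [vector [a, 0, 0], vector [0, b, 0], vector [0, 0, c]]"

definition w0 :: mat3 where
  "w0 = vector [vector [0, 0, -1], vector [0, -1, 0], vector [-1, 0, 0]]"

definition z2 :: mat3 where
  "z2 = vector [vector [0, 0, 1], vector [-1, 0, 0], vector [0, -1, 0]]"

text \<open>The right coset P g, a point of P\G.\<close>
definition rcos :: "mat3 \<Rightarrow> mat3 set" where
  "rcos g = (\<lambda>p. p ** g) ` Bor"

text \<open>Points of X = (P\G)^3.\<close>
type_synonym pt = "mat3 set \<times> mat3 set \<times> mat3 set"

definition Xsp :: "pt set" where
  "Xsp = {(rcos a, rcos b, rcos c) | a b c. a \<in> SL3 \<and> b \<in> SL3 \<and> c \<in> SL3}"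

definition act :: "pt \<Rightarrow> mat3 \<Rightarrow> pt" where
  "act x g = (case x of (A, B, C) \<Rightarrow>
      ((\<lambda>h. h ** g) ` A, (\<lambda>h. h ** g) ` B, (\<lambda>h. h ** g) ` C))"

definition orbit :: "pt \<Rightarrow> pt set" where
  "orbit x = act x ` SL3"

definition stab :: "pt \<Rightarrow> mat3 set" where
  "stab x = {g \<in> SL3. act x g = x}"

definition dcos :: "mat3 \<Rightarrow> mat3 set" where
  "dcos v = {p ** v ** q | p q. p \<in> Bor \<and> q \<in> Bor}"

definition schubert :: "mat3 \<Rightarrow> mat3 \<Rightarrow> pt set" where
  "schubert v w = {act (rcos (mat 1), rcos q1, rcos q2) g | q1 q2 g.
       q1 \<in> dcos v \<and> q2 \<in> dcos w \<and> g \<in> SL3}"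

text \<open>Tangent space at the identity (Lie algebra) of a matrix group H:
  velocities at 0 of curves through the identity staying locally in H.\<close>
definition lie_tangent :: "mat3 set \<Rightarrow> mat3 set" where
  "lie_tangent H = {X. \<exists>c e. e > 0 \<and> (\<forall>t. \<bar>t\<bar> < e \<longrightarrow> c t \<in> H) \<and>
       c 0 = mat 1 \<and> (c has_vector_derivative X) (at 0)}"

text \<open>Dimension of the orbit of x: dim G - dim Stab(x) (orbit x = Stab(x)\G).\<close>
definition orbit_dim :: "pt \<Rightarrow> nat" where
  "orbit_dim x = dim (lie_tangent SL3) - dim (lie_tangent (stab x))"

definition basept :: "mat3 \<Rightarrow> pt" where
  "basept n = (rcos (mat 1), rcos w0, rcos (z2 ** n))"

end

theory Submission imports Defs begin

definition M3 :: "real \<Rightarrow> real \<Rightarrow> real \<Rightarrow> real \<Rightarrow> real \<Rightarrow> real \<Rightarrow> real \<Rightarrow> real \<Rightarrow> real \<Rightarrow> mat3" where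
  "M3 a b c d e f g h i = vector [vector [a, b, c], vector [d, e, f], vector [g, h, i]]"

lemma M3_nth[simp]:
  "M3 a b c d e f g h i $ 1 $ 1 = a" "M3 a b c d e f g h i $ 1 $ 2 = b" "M3 a b c d e f g h i $ 1 $ 3 = c"
  "M3 a b c d e f g h i $ 2 $ 1 = d" "M3 a b c d e f g h i $ 2 $ 2 = e" "M3 a b c d e f g h i $ 2 $ 3 = f"
  "M3 a b c d e f g h i $ 3 $ 1 = g" "M3 a b c d e f g h i $ 3 $ 2 = h" "M3 a b c d e f g h i $ 3 $ 3 = i"
  by (simp_all add: M3_def)

lemma M3_exp: "(A::mat3) = M3 (A$1$1) (A$1$2) (A$1$3) (A$2$1) (A$2$2) (A$2$3) (A$3$1) (A$3$2) (A$3$3)"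
  by (simp add: vec_eq_iff forall_3)

lemma M3_eq_iff[simp]: "M3 a b c d e f g h i = M3 a' b' c' d' e' f' g' h' i' \<longleftrightarrow>
   a = a' \<and> b = b' \<and> c = c' \<and> d = d' \<and> e = e' \<and> f = f' \<and> g = g' \<and> h = h' \<and> i = i'"
  by (auto simp: vec_eq_iff forall_3)

lemma M3_mult[simp]: "M3 a b c d e f g h i ** M3 a' b' c' d' e' f' g' h' i' =
  M3 (a*a'+b*d'+c*g') (a*b'+b*e'+c*h') (a*c'+b*f'+c*i')
     (d*a'+e*d'+f*g') (d*b'+e*e'+f*h') (d*c'+e*f'+f*i')
     (g*a'+h*d'+i*g') (g*b'+h*e'+i*h') (g*c'+h*f'+i*i')"
  by (simp add: vec_eq_iff forall_3 matrix_matrix_mult_def sum_3)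

lemma M3_det[simp]: "det (M3 a b c d e f g h i) = a*e*i + b*f*g + c*d*h - a*f*h - b*d*i - c*e*g"
  by (simp add: det_3)

lemma mat1_M3: "(mat 1 :: mat3) = M3 1 0 0 0 1 0 0 0 1"
  by (simp add: vec_eq_iff forall_3 mat_def)

lemma defs_M3: "nmat x y z = M3 1 x y 0 1 z 0 0 1" "dmat a b c = M3 a 0 0 0 b 0 0 0 c"
  "w0 = M3 0 0 (-1) 0 (-1) 0 (-1) 0 0" "z2 = M3 0 0 1 (-1) 0 0 0 (-1) 0"
  by (simp_all add: nmat_def dmat_def w0_def z2_def M3_def)

lemma M3_scale[simp]: "r *\<^sub>R M3 a b c d e f g h i = M3 (r*a) (r*b) (r*c) (r*d) (r*e) (r*f) (r*g) (r*h) (r*i)"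
  by (simp add: vec_eq_iff forall_3)
lemma M3_add[simp]: "M3 a b c d e f g h i + M3 a' b' c' d' e' f' g' h' i' =
  M3 (a+a') (b+b') (c+c') (d+d') (e+e') (f+f') (g+g') (h+h') (i+i')"
  by (simp add: vec_eq_iff forall_3)
lemma M3_zero: "(0::mat3) = M3 0 0 0 0 0 0 0 0 0"
  by (simp add: vec_eq_iff forall_3)
lemma M3_inner[simp]: "M3 a b c d e f g h i \<bullet> M3 a' b' c' d' e' f' g' h' i' =
  a*a'+b*b'+c*c'+d*d'+e*e'+f*f'+g*g'+h*h'+i*i'"
  by (simp add: inner_vec_def sum_3)

lemma Bor_iff: "A \<in> Bor \<longleftrightarrow> (\<exists>a b c d e f. A = M3 a b c 0 d e 0 0 f \<and> a*d*f = 1)"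
proof
  assume "A \<in> Bor" then show "\<exists>a b c d e f. A = M3 a b c 0 d e 0 0 f \<and> a*d*f = 1"
    unfolding Bor_def SL3_def
    apply (subst (asm) M3_exp[of A]) apply (subst M3_exp[of A]) by auto
next
  assume "\<exists>a b c d e f. A = M3 a b c 0 d e 0 0 f \<and> a*d*f = 1"
  then show "A \<in> Bor" unfolding Bor_def SL3_def by auto
qed

lemma Bor_mult: "p \<in> Bor \<Longrightarrow> q \<in> Bor \<Longrightarrow> p ** q \<in> Bor"
  unfolding Bor_def SL3_def
  apply (simp add: det_mul)
  apply (subst (1 2 3) M3_exp[of p], subst (1 2 3) M3_exp[of q])
  by simp

lemma Bor_inv: "q \<in> Bor \<Longrightarrow> \<exists>q'\<in>Bor. q' ** q = mat 1 \<and> q ** q' = mat 1"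
  unfolding Bor_iff apply clarsimp
  subgoal for a b c d e f
  proof -
    assume h: "a*d*f = 1"
    then have nz: "a \<noteq> 0" "d \<noteq> 0" "f \<noteq> 0" by auto
    show ?thesis
    apply (rule bexI[of _ "M3 (1/a) (-b/(a*d)) ((b*e - c*d)/(a*d*f)) 0 (1/d) (-e/(d*f)) 0 0 (1/f)"])
     apply (simp add: mat1_M3 field_simps nz)
      apply (simp add: Bor_iff)
      using h nz by (simp add: field_simps)
  qed
  done

lemma one_Bor: "mat 1 \<in> Bor" by (auto simp: Bor_iff mat1_M3)


lemma cancel_right: "det (g::mat3) \<noteq> 0 \<Longrightarrow> A ** g = B ** g \<Longrightarrow> A = B"
proof -
  assume "det g \<noteq> 0" "A ** g = B ** g"
  then obtain g' where "g ** g' = mat 1" using invertible_det_nz[of g] unfolding invertible_def by auto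
  then show "A = B" using \<open>A ** g = B ** g\<close>
    by (metis matrix_mul_assoc matrix_mul_rid)
qed

lemma act_rcos: "act (rcos a, rcos b, rcos c) g = (rcos (a**g), rcos (b**g), rcos (c**g))"
  unfolding act_def rcos_def by (simp add: image_image matrix_mul_assoc)

lemma rcos_self: "a \<in> rcos a"
  unfolding rcos_def using one_Bor by force

lemma Bor_rmult: "q \<in> Bor \<Longrightarrow> (\<lambda>p. p ** q) ` Bor = Bor"
proof
  assume q: "q \<in> Bor"
  show "(\<lambda>p. p ** q) ` Bor \<subseteq> Bor" using Bor_mult q by auto
  obtain q' where q': "q' \<in> Bor" "q' ** q = mat 1" "q ** q' = mat 1" using Bor_inv[OF q] by auto
  show "Bor \<subseteq> (\<lambda>p. p ** q) ` Bor"
  proof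
    fix p assume "p \<in> Bor"
    then have "p ** q' \<in> Bor" "p = (p ** q') ** q" using Bor_mult q' by (auto simp: matrix_mul_assoc[symmetric])
    then show "p \<in> (\<lambda>p. p ** q) ` Bor" by blast
  qed
qed

lemma rcos_left: "q \<in> Bor \<Longrightarrow> rcos (q ** b) = rcos b"
proof -
  assume q: "q \<in> Bor"
  have "rcos (q ** b) = (\<lambda>p. p ** b) ` ((\<lambda>p. p ** q) ` Bor)"
    unfolding rcos_def by (simp add: image_image matrix_mul_assoc)
  then show ?thesis using Bor_rmult[OF q] by (simp add: rcos_def)
qed

lemma rcos_eqD: "rcos a = rcos b \<Longrightarrow> \<exists>p\<in>Bor. a = p ** b"
  using rcos_self[of a] unfolding rcos_def by auto

lemma orbit_basept: "orbit (basept n) = {(rcos g, rcos (w0**g), rcos (z2**n**g)) | g. g \<in> SL3}"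
  unfolding orbit_def basept_def by (auto simp: act_rcos)

lemma w0_lemma: "w0 ** p = q ** w0 \<Longrightarrow> p \<in> Bor \<Longrightarrow> q \<in> Bor \<Longrightarrow> \<exists>a d f. p = dmat a d f \<and> a*d*f = 1"
  unfolding Bor_iff defs_M3 by auto

lemma conj_lemma: "z2 ** nmat 0 y z ** dmat a d f = p ** (z2 ** nmat 0 y' z') \<Longrightarrow> p \<in> Bor \<Longrightarrow>
   a*y' = y*f \<and> d*z' = z*f"
  unfolding Bor_iff defs_M3 by auto

lemma SL3_det: "g \<in> SL3 \<Longrightarrow> det g \<noteq> 0" by (simp add: SL3_def)

lemma orbit_rel:
  assumes g': "g' \<in> SL3"
    and e1: "rcos g = rcos g'" and e2: "rcos (w0**g) = rcos (w0**g')"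
    and e3: "rcos (z2**nmat 0 y z**g) = rcos (z2**nmat 0 y' z'**g')"
  shows "\<exists>a d f. g = dmat a d f ** g' \<and> a*d*f = 1 \<and> a*y' = y*f \<and> d*z' = z*f"
proof -
  obtain p where p: "p \<in> Bor" "g = p ** g'" using rcos_eqD[OF e1] by auto
  obtain q where q: "q \<in> Bor" "w0 ** g = q ** (w0 ** g')" using rcos_eqD[OF e2] by auto
  have "(w0 ** p) ** g' = (q ** w0) ** g'" using p q by (simp add: matrix_mul_assoc)
  then have "w0 ** p = q ** w0" using cancel_right SL3_det[OF g'] by blast
  then obtain a d f where adf: "p = dmat a d f" "a*d*f = 1" using w0_lemma p q by blast
  obtain r where r: "r \<in> Bor" "z2**nmat 0 y z**g = r ** (z2**nmat 0 y' z'**g')" using rcos_eqD[OF e3] by auto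
  have "(z2 ** nmat 0 y z ** dmat a d f) ** g' = (r ** (z2**nmat 0 y' z')) ** g'"
    using r p adf by (simp add: matrix_mul_assoc)
  then have "z2 ** nmat 0 y z ** dmat a d f = r ** (z2**nmat 0 y' z')" using cancel_right SL3_det[OF g'] by blast
  then have "a*y' = y*f \<and> d*z' = z*f" using conj_lemma r by blast
  then show ?thesis using p adf by blast
qed


lemma act_basept: "act (basept n) g = (rcos g, rcos (w0**g), rcos (z2**n**g))"
  unfolding basept_def by (simp add: act_rcos)

lemma dmat_Bor: "a*d*f = 1 \<Longrightarrow> dmat a d f \<in> Bor"
  unfolding Bor_iff defs_M3 by auto

lemma stab_char: "stab (basept (nmat 0 y z)) = {dmat a d f | a d f. a*d*f = 1 \<and> a*y = y*f \<and> d*z = z*f}"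
proof (intro set_eqI iffI)
  fix g assume "g \<in> stab (basept (nmat 0 y z))"
  then have g0: "g \<in> SL3" "act (basept (nmat 0 y z)) g = basept (nmat 0 y z)" by (auto simp: stab_def)
  then have g: "g \<in> SL3" "rcos g = rcos (mat 1)" "rcos (w0**g) = rcos (w0 ** mat 1)"
    "rcos (z2**nmat 0 y z**g) = rcos (z2**nmat 0 y z** mat 1)"
    unfolding act_basept unfolding basept_def by simp_all
  have "mat 1 \<in> SL3" by (simp add: SL3_def)
  from orbit_rel[OF this g(2-4)] show "g \<in> {dmat a d f | a d f. a*d*f = 1 \<and> a*y = y*f \<and> d*z = z*f}"
    by auto
next
  fix g assume "g \<in> {dmat a d f | a d f. a*d*f = 1 \<and> a*y = y*f \<and> d*z = z*f}"
  then obtain a d f where h: "g = dmat a d f" "a*d*f = 1" "a*y = y*f" "d*z = z*f" by auto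
  have 1: "rcos g = rcos (mat 1)" using rcos_left[OF dmat_Bor[OF h(2)], of "mat 1"] h by simp
  have "w0 ** g = dmat f d a ** w0" using h by (simp add: defs_M3)
  then have 2: "rcos (w0 ** g) = rcos w0" using rcos_left[OF dmat_Bor, of f d a w0] h(2) by (simp add: mult.commute mult.left_commute)
  have "z2 ** nmat 0 y z ** g = dmat f a d ** (z2 ** nmat 0 y z)" using h by (auto simp add: defs_M3 mult.commute)
  then have 3: "rcos (z2 ** nmat 0 y z ** g) = rcos (z2 ** nmat 0 y z)"
    using rcos_left[OF dmat_Bor, of f a d] h(2) by (simp add: mult.commute mult.left_commute)
  have "g \<in> SL3" using h by (simp add: SL3_def defs_M3)
  then show "g \<in> stab (basept (nmat 0 y z))"
    unfolding stab_def act_basept using 1 2 3 by (simp add: basept_def)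
qed

lemma orbit_meet: "orbit (basept (nmat 0 y z)) \<inter> orbit (basept (nmat 0 y' z')) \<noteq> {} \<Longrightarrow>
   \<exists>a d f. a*d*f = 1 \<and> a*y' = y*f \<and> d*z' = z*f"
  unfolding orbit_basept using orbit_rel by blast

lemma key_gen:
  assumes b: "b = M3 b1 b2 b3 0 b4 b5 0 0 b6" "b1*b4*b6 = 1" and adf: "a*d*f = 1"
    and eq1: "b1*(-y/a) + b2*(-z/d) + b3/f = 0" and eq2: "b4*(-z/d) + b5/f = 0"
  shows "\<exists>p. p \<in> Bor \<and> z2 ** b = p ** (z2 ** nmat 0 y z ** dmat a d f)"
proof -
  have nz: "a \<noteq> 0" "d \<noteq> 0" "f \<noteq> 0" using adf by auto
  define P where "P = z2 ** b ** dmat (1/a) (1/d) (1/f) ** nmat 0 (-y) (-z) ** M3 0 (-1) 0 0 0 (-1) 1 0 0"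
  have "P \<in> Bor" unfolding P_def Bor_def SL3_def using b nz eq1 eq2 adf
    by (simp add: defs_M3 field_simps)
  moreover have "z2 ** b = P ** (z2 ** nmat 0 y z ** dmat a d f)"
    unfolding P_def using b nz by (simp add: defs_M3 field_simps)
  ultimately show ?thesis by blast
qed


lemma cube_root: "r \<noteq> 0 \<Longrightarrow> \<exists>f::real. f^3 = r \<and> f \<noteq> 0"
  by (rule exI[of _ "root 3 r"]) (simp add: odd_real_root_pow)

lemma key: "b \<in> Bor \<Longrightarrow> \<exists>y z a d f p. ((y=1\<and>z=1) \<or> (y=0\<and>z=1) \<or> (y=1\<and>z=0) \<or> (y=0\<and>z=0)) \<and>
   a*d*f = 1 \<and> p \<in> Bor \<and> z2 ** b = p ** (z2 ** nmat 0 y z ** dmat a d f)"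
proof -
  assume "b \<in> Bor"
  then obtain b1 b2 b3 b4 b5 b6 where b: "b = M3 b1 b2 b3 0 b4 b5 0 0 b6" "b1*b4*b6 = 1"
    unfolding Bor_iff by blast
  have nz: "b1 \<noteq> 0" "b4 \<noteq> 0" "b6 \<noteq> 0" using b by auto
  consider "b5 = 0" "b3 = 0" | "b5 = 0" "b3 \<noteq> 0" | "b5 \<noteq> 0" "b3*b4 - b2*b5 = 0"
    | "b5 \<noteq> 0" "b3*b4 - b2*b5 \<noteq> 0" by blast
  then show ?thesis
  proof cases
    case 1
    from key_gen[OF b, of 1 1 1 0 0] 1 obtain p where "p \<in> Bor" "z2 ** b = p ** (z2 ** nmat 0 0 0 ** dmat 1 1 1)" by auto
    then show ?thesis apply - apply (rule exI[of _ 0], rule exI[of _ 0], rule exI[of _ 1], rule exI[of _ 1], rule exI[of _ 1]) by auto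
  next
    case 2
    obtain f where f: "f^3 = b3/b1" "f \<noteq> 0" using cube_root[of "b3/b1"] 2 nz by auto
    have adf: "(b1*f/b3)*f*f = 1" using f 2 nz by (simp add: field_simps power3_eq_cube)
    have "b1*(-1/(b1*f/b3)) + b2*(-0/f) + b3/f = 0" using f 2 nz by (simp add: field_simps)
    from key_gen[OF b adf this] 2 obtain p where "p \<in> Bor" "z2 ** b = p ** (z2 ** nmat 0 1 0 ** dmat (b1*f/b3) f f)" by auto
    then show ?thesis using adf apply - apply (rule exI[of _ 1], rule exI[of _ 0], rule exI[of _ "b1*f/b3"], rule exI[of _ f], rule exI[of _ f]) by auto
  next
    case 3
    obtain f where f: "f^3 = b5/b4" "f \<noteq> 0" using cube_root[of "b5/b4"] 3 nz by auto
    have adf: "f*(b4*f/b5)*f = 1" using f 3 nz by (simp add: field_simps power3_eq_cube)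
    have e1: "b1*(-0/f) + b2*(-1/(b4*f/b5)) + b3/f = 0" using f 3 nz by (simp add: field_simps)
    have e2: "b4*(-1/(b4*f/b5)) + b5/f = 0" using f 3 nz by (simp add: field_simps)
    from key_gen[OF b adf e1 e2] obtain p where "p \<in> Bor" "z2 ** b = p ** (z2 ** nmat 0 0 1 ** dmat f (b4*f/b5) f)" by auto
    then show ?thesis using adf apply - apply (rule exI[of _ 0], rule exI[of _ 1], rule exI[of _ f], rule exI[of _ "b4*f/b5"], rule exI[of _ f]) by auto
  next
    case 4
    define k where "k = b3*b4 - b2*b5"
    have k: "k \<noteq> 0" using 4 k_def by simp
    obtain f where f: "f^3 = k*b5/(b1*b4^2)" "f \<noteq> 0" using cube_root[of "k*b5/(b1*b4^2)"] 4 nz k by auto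
    have adf: "(b1*b4*f/k)*(b4*f/b5)*f = 1" using f 4 nz k by (simp add: field_simps power3_eq_cube power2_eq_square)
    have e1: "b1*(-1/(b1*b4*f/k)) + b2*(-1/(b4*f/b5)) + b3/f = 0" using f 4 nz k
      by (simp add: field_simps k_def)
    have e2: "b4*(-1/(b4*f/b5)) + b5/f = 0" using f 4 nz by (simp add: field_simps)
    from key_gen[OF b adf e1 e2] obtain p where "p \<in> Bor" "z2 ** b = p ** (z2 ** nmat 0 1 1 ** dmat (b1*b4*f/k) (b4*f/b5) f)" by auto
    then show ?thesis using adf apply - apply (rule exI[of _ 1], rule exI[of _ 1], rule exI[of _ "b1*b4*f/k"], rule exI[of _ "b4*f/b5"], rule exI[of _ f]) by auto
  qed
qed


lemma Bor_SL3: "p \<in> Bor \<Longrightarrow> p \<in> SL3" by (simp add: Bor_def)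

lemma nmat_Bor: "nmat 0 y z \<in> Bor" by (simp add: Bor_iff defs_M3)

lemma schubert_sub: "x \<in> schubert w0 z2 \<Longrightarrow> \<exists>y z. ((y=1\<and>z=1) \<or> (y=0\<and>z=1) \<or> (y=1\<and>z=0) \<or> (y=0\<and>z=0)) \<and>
    x \<in> orbit (basept (nmat 0 y z))"
proof -
  assume "x \<in> schubert w0 z2"
  then obtain q1 q2 g where x: "x = act (rcos (mat 1), rcos q1, rcos q2) g" "q1 \<in> dcos w0" "q2 \<in> dcos z2" "g \<in> SL3"
    unfolding schubert_def by blast
  obtain p1 p1' where p1: "p1 \<in> Bor" "p1' \<in> Bor" "q1 = p1 ** w0 ** p1'" using x(2) unfolding dcos_def by blast
  obtain p2 p2' where p2: "p2 \<in> Bor" "p2' \<in> Bor" "q2 = p2 ** z2 ** p2'" using x(3) unfolding dcos_def by blast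
  obtain i1 where i1: "i1 \<in> Bor" "i1 ** p1' = mat 1" using Bor_inv[OF p1(2)] by blast
  have "p2' ** i1 \<in> Bor" using Bor_mult p2 i1 by blast
  from key[OF this] obtain y z a d f p where k: "((y=1\<and>z=1) \<or> (y=0\<and>z=1) \<or> (y=1\<and>z=0) \<or> (y=0\<and>z=0))"
    "a*d*f = 1" "p \<in> Bor" "z2 ** (p2' ** i1) = p ** (z2 ** nmat 0 y z ** dmat a d f)" by blast
  define h where "h = dmat a d f ** p1' ** g"
  have dB: "dmat a d f ** p1' \<in> Bor" using Bor_mult dmat_Bor[OF k(2)] p1(2) by blast
  have hS: "h \<in> SL3" using dB x(4) Bor_SL3[OF dB] unfolding h_def SL3_def by (simp add: det_mul)
  have c1: "rcos h = rcos g" unfolding h_def using rcos_left[OF dB] .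
  have "w0 ** h = dmat f d a ** (w0 ** p1' ** g)" unfolding h_def
    by (simp add: matrix_mul_assoc defs_M3)
  then have "rcos (w0 ** h) = rcos (w0 ** p1' ** g)"
    using rcos_left[OF dmat_Bor, of f d a] k(2) by (simp add: mult.commute mult.left_commute)
  also have "\<dots> = rcos (q1 ** g)" using rcos_left[OF p1(1), of "w0 ** p1' ** g"] p1(3)
    by (simp add: matrix_mul_assoc)
  finally have c2: "rcos (w0 ** h) = rcos (q1 ** g)" .
  have "z2 ** p2' ** g = z2 ** (p2' ** i1) ** p1' ** g" using i1
    by (metis matrix_mul_assoc matrix_mul_rid)
  also have "\<dots> = p ** (z2 ** nmat 0 y z ** h)" unfolding k(4) h_def by (simp add: matrix_mul_assoc)
  finally have "rcos (z2 ** p2' ** g) = rcos (z2 ** nmat 0 y z ** h)" using rcos_left[OF k(3)] by simp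
  moreover have "rcos (q2 ** g) = rcos (z2 ** p2' ** g)" using rcos_left[OF p2(1), of "z2 ** p2' ** g"] p2(3)
    by (simp add: matrix_mul_assoc)
  ultimately have c3: "rcos (z2 ** nmat 0 y z ** h) = rcos (q2 ** g)" by simp
  have "x = act (basept (nmat 0 y z)) h" unfolding act_basept x(1) act_rcos using c1 c2 c3 by simp
  then have "x \<in> orbit (basept (nmat 0 y z))" unfolding orbit_def using hS by blast
  then show ?thesis using k(1) by blast
qed

lemma orbit_sub: "orbit (basept (nmat 0 y z)) \<subseteq> schubert w0 z2"
proof
  fix x assume "x \<in> orbit (basept (nmat 0 y z))"
  then obtain g where g: "g \<in> SL3" "x = act (basept (nmat 0 y z)) g" unfolding orbit_def by blast
  have "w0 \<in> dcos w0" unfolding dcos_def using one_Bor by force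
  moreover have "z2 ** nmat 0 y z \<in> dcos z2" unfolding dcos_def using one_Bor nmat_Bor by force
  ultimately show "x \<in> schubert w0 z2" unfolding schubert_def using g unfolding basept_def by blast
qed

lemma schubert_eq: "schubert w0 z2 = orbit (basept (nmat 0 1 1)) \<union> orbit (basept (nmat 0 0 1))
            \<union> orbit (basept (nmat 0 1 0)) \<union> orbit (basept (nmat 0 0 0))"
  apply (rule equalityI)
   apply (rule subsetI) apply (drule schubert_sub) apply blast
  using orbit_sub by blast


lemma comp_deriv: "(c has_vector_derivative X) (at 0) \<Longrightarrow> ((\<lambda>t. c t $ i $ j) has_field_derivative X $ i $ j) (at 0)"
proof -
  assume "(c has_vector_derivative X) (at 0)"
  from bounded_linear.has_vector_derivative[OF _ this, of "\<lambda>M. M $ i $ j"]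
  have "((\<lambda>t. c t $ i $ j) has_vector_derivative X $ i $ j) (at 0)"
    by (simp add: bounded_linear_compose[OF bounded_linear_vec_nth bounded_linear_vec_nth])
  then show ?thesis by (simp add: has_real_derivative_iff_has_vector_derivative)
qed

lemma constr:
  assumes "(e::real) > 0" "\<forall>t. \<bar>t\<bar> < e \<longrightarrow> c t \<in> H" "\<And>M. M \<in> H \<Longrightarrow> F M = k"
    and D: "((\<lambda>t. F (c t)) has_field_derivative D) (at 0)"
  shows "D = 0"
proof -
  have ev: "eventually (\<lambda>t. t \<in> ball 0 e) (nhds (0::real))"
    using assms(1) by (intro eventually_nhds_in_open) auto
  have "eventually (\<lambda>t. F (c t) = k) (nhds (0::real))"
    by (rule eventually_mono[OF ev]) (use assms(2,3) in \<open>auto simp: dist_real_def\<close>)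
  then have "((\<lambda>t. F (c t)) has_field_derivative 0) (at 0)"
    using DERIV_cong_ev[of 0 0 "\<lambda>t. F (c t)" "\<lambda>t. k" 0 0] by simp
  then show ?thesis using D DERIV_unique by blast
qed

lemma lie_I: assumes "e > 0" "\<forall>t. \<bar>t\<bar> < e \<longrightarrow> c t \<in> H" "c 0 = mat 1" "(c has_vector_derivative X) (at 0)"
  shows "X \<in> lie_tangent H"
  using assms unfolding lie_tangent_def by blast

lemma lie_E: assumes "X \<in> lie_tangent H"
  obtains c e where "e > 0" "\<forall>t. \<bar>t\<bar> < e \<longrightarrow> c t \<in> H" "c 0 = mat 1" "(c has_vector_derivative X) (at 0)"
  using assms unfolding lie_tangent_def by blast

lemma curve1: "((\<lambda>t. mat 1 + f t *\<^sub>R A) has_vector_derivative (f' *\<^sub>R A)) (at 0)"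
  if "(f has_field_derivative f') (at 0)" for A :: mat3
  by (auto intro!: derivative_eq_intros that)

lemma curve2: "((\<lambda>t. mat 1 + f t *\<^sub>R A + g t *\<^sub>R B) has_vector_derivative (f' *\<^sub>R A + g' *\<^sub>R B)) (at 0)"
  if "(f has_field_derivative f') (at 0)" "(g has_field_derivative g') (at 0)" for A B :: mat3
  by (auto intro!: derivative_eq_intros that)


lemma SL3_trace: "X \<in> lie_tangent SL3 \<Longrightarrow> X$1$1 + X$2$2 + X$3$3 = 0"
proof -
  assume "X \<in> lie_tangent SL3"
  then obtain c e where c: "e > 0" "\<forall>t. \<bar>t\<bar> < e \<longrightarrow> c t \<in> SL3" "c 0 = mat 1" "(c has_vector_derivative X) (at 0)"
    by (rule lie_E)
  have "((\<lambda>t. det (c t)) has_field_derivative (X$1$1+X$2$2+X$3$3)) (at 0)"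
    unfolding det_3
    by (auto intro!: derivative_eq_intros comp_deriv[OF c(4)] simp: c(3) mat1_M3)
  from constr[where F=det and k=1, OF c(1,2) _ this] show ?thesis by (simp add: SL3_def)
qed

lemma dim_SL3: "dim (lie_tangent SL3) = 8"
proof (rule dim_unique)
  let ?B = "{M3 0 1 0 0 0 0 0 0 0, M3 0 0 1 0 0 0 0 0 0, M3 0 0 0 1 0 0 0 0 0, M3 0 0 0 0 0 1 0 0 0,
     M3 0 0 0 0 0 0 1 0 0, M3 0 0 0 0 0 0 0 1 0, M3 1 0 0 0 (-1) 0 0 0 0, M3 1 0 0 0 1 0 0 0 (-2)}"
  show "card ?B = 8" by simp
  show "independent ?B"
    by (rule pairwise_orthogonal_independent) (auto simp: pairwise_insert orthogonal_def M3_zero)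
  show "lie_tangent SL3 \<subseteq> span ?B"
  proof
    fix X assume X: "X \<in> lie_tangent SL3"
    have tr: "X$1$1 + X$2$2 + X$3$3 = 0" using SL3_trace[OF X] .
    have "X = X$1$2 *\<^sub>R M3 0 1 0 0 0 0 0 0 0 + X$1$3 *\<^sub>R M3 0 0 1 0 0 0 0 0 0 + X$2$1 *\<^sub>R M3 0 0 0 1 0 0 0 0 0
       + X$2$3 *\<^sub>R M3 0 0 0 0 0 1 0 0 0 + X$3$1 *\<^sub>R M3 0 0 0 0 0 0 1 0 0 + X$3$2 *\<^sub>R M3 0 0 0 0 0 0 0 1 0
       + (X$1$1 + X$3$3/2) *\<^sub>R M3 1 0 0 0 (-1) 0 0 0 0 + (- X$3$3/2) *\<^sub>R M3 1 0 0 0 1 0 0 0 (-2)"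
      apply (subst M3_exp[of X]) using tr by simp
    also have "\<dots> \<in> span ?B" by (intro span_add span_scale span_base) auto
    finally show "X \<in> span ?B" .
  qed
  show "?B \<subseteq> lie_tangent SL3"
  proof -
    have off: "M3 0 b c d 0 f g h 0 \<in> lie_tangent SL3" if "b*d = 0" "c*g = 0" "f*h=0" "b*f*g=0" "c*d*h = 0" for b c d f g h
    proof (rule lie_I[of 1 "\<lambda>t. mat 1 + t *\<^sub>R M3 0 b c d 0 f g h 0"])
      show "((\<lambda>t. mat 1 + t *\<^sub>R M3 0 b c d 0 f g h 0) has_vector_derivative M3 0 b c d 0 f g h 0) (at 0)"
        using curve1[of "\<lambda>t. t" 1 "M3 0 b c d 0 f g h 0"] by (simp add: DERIV_ident)
      show "\<forall>t. \<bar>t\<bar> < 1 \<longrightarrow> mat 1 + t *\<^sub>R M3 0 b c d 0 f g h 0 \<in> SL3"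
        using that by (auto simp: SL3_def mat1_M3 algebra_simps)
    qed (auto simp: M3_zero)
    have h1: "((\<lambda>t. exp t - 1) has_real_derivative 1) (at 0)" by (auto intro!: derivative_eq_intros)
    have h2: "((\<lambda>t. exp (-t) - 1) has_real_derivative -1) (at 0)" by (auto intro!: derivative_eq_intros)
    have h3: "((\<lambda>t. exp (-2*t) - 1) has_real_derivative -2) (at 0)" by (auto intro!: derivative_eq_intros)
    have d1: "M3 1 0 0 0 (-1) 0 0 0 0 \<in> lie_tangent SL3"
    proof (rule lie_I[of 1 "\<lambda>t. mat 1 + (exp t - 1) *\<^sub>R M3 1 0 0 0 0 0 0 0 0 + (exp (-t) - 1) *\<^sub>R M3 0 0 0 0 1 0 0 0 0"])
      show "((\<lambda>t. mat 1 + (exp t - 1) *\<^sub>R M3 1 0 0 0 0 0 0 0 0 + (exp (-t) - 1) *\<^sub>R M3 0 0 0 0 1 0 0 0 0) has_vector_derivative M3 1 0 0 0 (-1) 0 0 0 0) (at 0)"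
        using curve2[OF h1 h2, of "M3 1 0 0 0 0 0 0 0 0" "M3 0 0 0 0 1 0 0 0 0"] by simp
      show "\<forall>t. \<bar>t\<bar> < 1 \<longrightarrow> mat 1 + (exp t - 1) *\<^sub>R M3 1 0 0 0 0 0 0 0 0 + (exp (-t) - 1) *\<^sub>R M3 0 0 0 0 1 0 0 0 0 \<in> SL3"
        by (simp add: SL3_def mat1_M3 exp_minus field_simps)
    qed (auto simp: mat1_M3)
    have d2: "M3 1 0 0 0 1 0 0 0 (-2) \<in> lie_tangent SL3"
    proof (rule lie_I[of 1 "\<lambda>t. mat 1 + (exp t - 1) *\<^sub>R M3 1 0 0 0 1 0 0 0 0 + (exp (-2*t) - 1) *\<^sub>R M3 0 0 0 0 0 0 0 0 1"])
      show "((\<lambda>t. mat 1 + (exp t - 1) *\<^sub>R M3 1 0 0 0 1 0 0 0 0 + (exp (-2*t) - 1) *\<^sub>R M3 0 0 0 0 0 0 0 0 1) has_vector_derivative M3 1 0 0 0 1 0 0 0 (-2)) (at 0)"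
        using curve2[OF h1 h3, of "M3 1 0 0 0 1 0 0 0 0" "M3 0 0 0 0 0 0 0 0 1"] by simp
      show "\<forall>t. \<bar>t\<bar> < 1 \<longrightarrow> mat 1 + (exp t - 1) *\<^sub>R M3 1 0 0 0 1 0 0 0 0 + (exp (-2*t) - 1) *\<^sub>R M3 0 0 0 0 0 0 0 0 1 \<in> SL3"
        by (simp add: SL3_def mat1_M3 exp_minus field_simps flip: exp_add)
    qed (auto simp: mat1_M3)
    show ?thesis using off d1 d2 by simp
  qed
qed




lemma cube_one: "(f::real)*f*f = 1 \<Longrightarrow> f = 1"
proof -
  assume h: "f*f*f = 1"
  have e: "(f - 1) * (f*f + f + 1) = f*f*f - 1" by (simp add: algebra_simps)
  have "(f - 1) * (f*f + f + 1) = 0" using h e by linarith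
  moreover have "f*f + f + 1 = (f + 1/2)^2 + 3/4" by (simp add: power2_eq_square algebra_simps)
  then have "f*f + f + 1 > 0" by (metis add_pos_nonneg zero_le_power2 zero_less_divide_iff zero_less_numeral add.commute add_nonneg_pos)
  ultimately show ?thesis by simp
qed

lemma dmat_one: "dmat 1 1 1 = mat 1" by (simp add: defs_M3 mat1_M3)

lemma stab1: "stab (basept (nmat 0 1 1)) = {mat 1}"
  unfolding stab_char
proof (intro set_eqI iffI)
  fix M assume "M \<in> {dmat a d f |a d f. a * d * f = 1 \<and> a * 1 = 1 * f \<and> d * 1 = 1 * f}"
  then obtain a d f where h: "M = dmat a d f" "a*d*f = 1" "a = f" "d = f" by auto
  then have "f*f*f = 1" by simp
  then have "f = 1" by (rule cube_one)
  then show "M \<in> {mat 1}" using h dmat_one by simp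
next
  fix M :: mat3 assume "M \<in> {mat 1}"
  then have "M = dmat 1 1 1" using dmat_one by simp
  then show "M \<in> {dmat a d f |a d f. a * d * f = 1 \<and> a * 1 = 1 * f \<and> d * 1 = 1 * f}"
    by auto
qed

lemma stab2: "stab (basept (nmat 0 0 1)) = {dmat (1 / a^2) a a | a. a \<noteq> 0}"
  unfolding stab_char
proof (intro set_eqI iffI)
  fix M assume "M \<in> {dmat a d f |a d f. a * d * f = 1 \<and> a * 0 = 0 * f \<and> d * 1 = 1 * f}"
  then obtain a d f where h: "M = dmat a d f" "a*d*f = 1" "d = f" by auto
  then have nz: "f \<noteq> 0" by auto
  then have "a = 1/f^2" using h by (auto simp: field_simps power2_eq_square)
  then have "M = dmat (1/f^2) f f" using h by simp
  then show "M \<in> {dmat (1 / a^2) a a | a. a \<noteq> 0}" using nz by blast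
next
  fix M assume "M \<in> {dmat (1 / a^2) a a | a. a \<noteq> 0}"
  then obtain a where h: "M = dmat (1/a^2) a a" "a \<noteq> 0" by auto
  then have "(1/a^2)*a*a = 1" by (simp add: power2_eq_square)
  then have "M = dmat (1/a^2) a a \<and> (1/a^2)*a*a = 1 \<and> (1/a^2)*0 = 0*a \<and> a*1 = 1*a" using h by simp
  then show "M \<in> {dmat a d f |a d f. a * d * f = 1 \<and> a * 0 = 0 * f \<and> d * 1 = 1 * f}" by blast
qed

lemma stab3: "stab (basept (nmat 0 1 0)) = {dmat a (1 / a^2) a | a. a \<noteq> 0}"
  unfolding stab_char
proof (intro set_eqI iffI)
  fix M assume "M \<in> {dmat a d f |a d f. a * d * f = 1 \<and> a * 1 = 1 * f \<and> d * 0 = 0 * f}"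
  then obtain a d f where h: "M = dmat a d f" "a*d*f = 1" "a = f" by auto
  then have nz: "f \<noteq> 0" by auto
  then have "d = 1/f^2" using h by (auto simp: field_simps power2_eq_square)
  then have "M = dmat f (1/f^2) f" using h by simp
  then show "M \<in> {dmat a (1 / a^2) a | a. a \<noteq> 0}" using nz by blast
next
  fix M assume "M \<in> {dmat a (1 / a^2) a | a. a \<noteq> 0}"
  then obtain a where h: "M = dmat a (1/a^2) a" "a \<noteq> 0" by auto
  then have "a*(1/a^2)*a = 1" by (simp add: power2_eq_square)
  then have "M = dmat a (1/a^2) a \<and> a*(1/a^2)*a = 1 \<and> a*1 = 1*a \<and> (1/a^2)*0 = 0*a" using h by simp
  then show "M \<in> {dmat a d f |a d f. a * d * f = 1 \<and> a * 1 = 1 * f \<and> d * 0 = 0 * f}" by blast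
qed

lemma stab4: "stab (basept (nmat 0 0 0)) = Diag"
  unfolding stab_char
proof (intro set_eqI iffI)
  fix M assume "M \<in> {dmat a d f |a d f. a * d * f = 1 \<and> a * 0 = 0 * f \<and> d * 0 = 0 * f}"
  then show "M \<in> Diag" unfolding Diag_def SL3_def by (auto simp: defs_M3 forall_3)
next
  fix M assume "M \<in> Diag"
  then have "M = dmat (M$1$1) (M$2$2) (M$3$3)" "M$1$1 * M$2$2 * M$3$3 = 1"
    unfolding Diag_def SL3_def
    by (subst M3_exp, auto simp: defs_M3 det_3)
  then show "M \<in> {dmat a d f |a d f. a * d * f = 1 \<and> a * 0 = 0 * f \<and> d * 0 = 0 * f}" by auto
qed

lemma comp_zero: "X \<in> lie_tangent H \<Longrightarrow> (\<And>M. M \<in> H \<Longrightarrow> M $ i $ j = k) \<Longrightarrow> X $ i $ j = 0"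
proof -
  assume X: "X \<in> lie_tangent H" and k: "\<And>M. M \<in> H \<Longrightarrow> M $ i $ j = k"
  obtain c e where c: "e > 0" "\<forall>t. \<bar>t\<bar> < e \<longrightarrow> c t \<in> H" "c 0 = mat 1" "(c has_vector_derivative X) (at 0)"
    using X by (rule lie_E)
  from constr[where F="\<lambda>M. M $ i $ j", OF c(1,2) k comp_deriv[OF c(4)]] show ?thesis .
qed

lemma dim_stab1: "dim (lie_tangent {mat 1}) = 0"
proof (rule dim_unique[of "{}"])
  show "lie_tangent {mat 1} \<subseteq> span {}"
  proof
    fix X assume X: "X \<in> lie_tangent {mat 1}"
    have "\<And>i j. X $ i $ j = 0" using comp_zero[OF X] by blast
    then have "X = 0" by (simp add: vec_eq_iff)
    then show "X \<in> span {}" by simp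
  qed
qed (use independent_empty in auto)


lemma dim_stab2: "dim (lie_tangent {dmat (1 / a^2) a a | a. a \<noteq> 0}) = 1"
proof (rule dim_unique[of "{M3 (-2) 0 0 0 1 0 0 0 1}"])
  let ?H = "{dmat (1 / a^2) a a | a. a \<noteq> 0}"
  show "lie_tangent ?H \<subseteq> span {M3 (-2) 0 0 0 1 0 0 0 1}"
  proof
    fix X assume X: "X \<in> lie_tangent ?H"
    have z: "X$1$2 = 0" "X$1$3 = 0" "X$2$1 = 0" "X$2$3 = 0" "X$3$1 = 0" "X$3$2 = 0"
      by (rule comp_zero[OF X], auto simp: defs_M3)+
    obtain c e where c: "e > 0" "\<forall>t. \<bar>t\<bar> < e \<longrightarrow> c t \<in> ?H" "c 0 = mat 1" "(c has_vector_derivative X) (at 0)"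
      using X by (rule lie_E)
    have "((\<lambda>t. c t $2$2 - c t $3$3) has_field_derivative (X$2$2 - X$3$3)) (at 0)"
      by (auto intro!: derivative_eq_intros comp_deriv[OF c(4)])
    moreover have "\<And>M. M \<in> ?H \<Longrightarrow> M$2$2 - M$3$3 = 0" by (auto simp: defs_M3)
    ultimately have e1: "X$2$2 - X$3$3 = 0" using constr[where F="\<lambda>M. M$2$2 - M$3$3" and k=0, OF c(1,2)] by blast
    have "((\<lambda>t. c t $1$1 * c t $2$2 * c t $2$2) has_field_derivative (X$1$1 + 2 * X$2$2)) (at 0)"
      by (auto intro!: derivative_eq_intros comp_deriv[OF c(4)] simp: c(3) mat1_M3)
    moreover have "\<And>M. M \<in> ?H \<Longrightarrow> M$1$1 * M$2$2 * M$2$2 = 1" by (auto simp: defs_M3 power2_eq_square)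
    ultimately have e2: "X$1$1 + 2 * X$2$2 = 0" using constr[where F="\<lambda>M. M$1$1 * M$2$2 * M$2$2" and k=1, OF c(1,2)] by blast
    have "X = X$2$2 *\<^sub>R M3 (-2) 0 0 0 1 0 0 0 1"
      apply (subst M3_exp[of X]) using z e1 e2 by simp
    also have "\<dots> \<in> span {M3 (-2) 0 0 0 1 0 0 0 1}" by (intro span_scale span_base) auto
    finally show "X \<in> span {M3 (-2) 0 0 0 1 0 0 0 1}" .
  qed
  have h1: "((\<lambda>t. 1 / (exp t)^2 - 1) has_real_derivative -2) (at 0)" by (auto intro!: derivative_eq_intros)
  have h2: "((\<lambda>t. exp t - 1) has_real_derivative 1) (at 0)" by (auto intro!: derivative_eq_intros)
  have "M3 (-2) 0 0 0 1 0 0 0 1 \<in> lie_tangent ?H"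
  proof (rule lie_I[of 1 "\<lambda>t. mat 1 + (1 / (exp t)^2 - 1) *\<^sub>R M3 1 0 0 0 0 0 0 0 0 + (exp t - 1) *\<^sub>R M3 0 0 0 0 1 0 0 0 1"])
    show "((\<lambda>t. mat 1 + (1 / (exp t)^2 - 1) *\<^sub>R M3 1 0 0 0 0 0 0 0 0 + (exp t - 1) *\<^sub>R M3 0 0 0 0 1 0 0 0 1) has_vector_derivative M3 (-2) 0 0 0 1 0 0 0 1) (at 0)"
      using curve2[OF h1 h2, of "M3 1 0 0 0 0 0 0 0 0" "M3 0 0 0 0 1 0 0 0 1"] by simp
    show "\<forall>t. \<bar>t\<bar> < 1 \<longrightarrow> mat 1 + (1 / (exp t)^2 - 1) *\<^sub>R M3 1 0 0 0 0 0 0 0 0 + (exp t - 1) *\<^sub>R M3 0 0 0 0 1 0 0 0 1 \<in> ?H"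
    proof (intro allI impI)
      fix t :: real
      have "mat 1 + (1 / (exp t)^2 - 1) *\<^sub>R M3 1 0 0 0 0 0 0 0 0 + (exp t - 1) *\<^sub>R M3 0 0 0 0 1 0 0 0 1 = dmat (1/(exp t)^2) (exp t) (exp t)"
        by (simp add: mat1_M3 defs_M3)
      then show "mat 1 + (1 / (exp t)^2 - 1) *\<^sub>R M3 1 0 0 0 0 0 0 0 0 + (exp t - 1) *\<^sub>R M3 0 0 0 0 1 0 0 0 1 \<in> ?H"
        by auto
    qed
  qed (auto simp: mat1_M3)
  then show "{M3 (-2) 0 0 0 1 0 0 0 1} \<subseteq> lie_tangent ?H" by simp
  show "independent {M3 (-2) 0 0 0 1 0 0 0 1}" by (simp add: M3_zero)
qed simp

lemma dim_stab3: "dim (lie_tangent {dmat a (1 / a^2) a | a. a \<noteq> 0}) = 1"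
proof (rule dim_unique[of "{M3 1 0 0 0 (-2) 0 0 0 1}"])
  let ?H = "{dmat a (1 / a^2) a | a. a \<noteq> 0}"
  show "lie_tangent ?H \<subseteq> span {M3 1 0 0 0 (-2) 0 0 0 1}"
  proof
    fix X assume X: "X \<in> lie_tangent ?H"
    have z: "X$1$2 = 0" "X$1$3 = 0" "X$2$1 = 0" "X$2$3 = 0" "X$3$1 = 0" "X$3$2 = 0"
      by (rule comp_zero[OF X], auto simp: defs_M3)+
    obtain c e where c: "e > 0" "\<forall>t. \<bar>t\<bar> < e \<longrightarrow> c t \<in> ?H" "c 0 = mat 1" "(c has_vector_derivative X) (at 0)"
      using X by (rule lie_E)
    have "((\<lambda>t. c t $1$1 - c t $3$3) has_field_derivative (X$1$1 - X$3$3)) (at 0)"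
      by (auto intro!: derivative_eq_intros comp_deriv[OF c(4)])
    moreover have "\<And>M. M \<in> ?H \<Longrightarrow> M$1$1 - M$3$3 = 0" by (auto simp: defs_M3)
    ultimately have e1: "X$1$1 - X$3$3 = 0" using constr[where F="\<lambda>M. M$1$1 - M$3$3" and k=0, OF c(1,2)] by blast
    have "((\<lambda>t. c t $2$2 * c t $1$1 * c t $1$1) has_field_derivative (X$2$2 + 2 * X$1$1)) (at 0)"
      by (auto intro!: derivative_eq_intros comp_deriv[OF c(4)] simp: c(3) mat1_M3)
    moreover have "\<And>M. M \<in> ?H \<Longrightarrow> M$2$2 * M$1$1 * M$1$1 = 1" by (auto simp: defs_M3 power2_eq_square)
    ultimately have e2: "X$2$2 + 2 * X$1$1 = 0" using constr[where F="\<lambda>M. M$2$2 * M$1$1 * M$1$1" and k=1, OF c(1,2)] by blast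
    have "X = X$1$1 *\<^sub>R M3 1 0 0 0 (-2) 0 0 0 1"
      apply (subst M3_exp[of X]) using z e1 e2 by simp
    also have "\<dots> \<in> span {M3 1 0 0 0 (-2) 0 0 0 1}" by (intro span_scale span_base) auto
    finally show "X \<in> span {M3 1 0 0 0 (-2) 0 0 0 1}" .
  qed
  have h1: "((\<lambda>t. 1 / (exp t)^2 - 1) has_real_derivative -2) (at 0)" by (auto intro!: derivative_eq_intros)
  have h2: "((\<lambda>t. exp t - 1) has_real_derivative 1) (at 0)" by (auto intro!: derivative_eq_intros)
  have "M3 1 0 0 0 (-2) 0 0 0 1 \<in> lie_tangent ?H"
  proof (rule lie_I[of 1 "\<lambda>t. mat 1 + (1 / (exp t)^2 - 1) *\<^sub>R M3 0 0 0 0 1 0 0 0 0 + (exp t - 1) *\<^sub>R M3 1 0 0 0 0 0 0 0 1"])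
    show "((\<lambda>t. mat 1 + (1 / (exp t)^2 - 1) *\<^sub>R M3 0 0 0 0 1 0 0 0 0 + (exp t - 1) *\<^sub>R M3 1 0 0 0 0 0 0 0 1) has_vector_derivative M3 1 0 0 0 (-2) 0 0 0 1) (at 0)"
      using curve2[OF h1 h2, of "M3 0 0 0 0 1 0 0 0 0" "M3 1 0 0 0 0 0 0 0 1"] by simp
    show "\<forall>t. \<bar>t\<bar> < 1 \<longrightarrow> mat 1 + (1 / (exp t)^2 - 1) *\<^sub>R M3 0 0 0 0 1 0 0 0 0 + (exp t - 1) *\<^sub>R M3 1 0 0 0 0 0 0 0 1 \<in> ?H"
    proof (intro allI impI)
      fix t :: real
      have "mat 1 + (1 / (exp t)^2 - 1) *\<^sub>R M3 0 0 0 0 1 0 0 0 0 + (exp t - 1) *\<^sub>R M3 1 0 0 0 0 0 0 0 1 = dmat (exp t) (1/(exp t)^2) (exp t)"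
        by (simp add: mat1_M3 defs_M3)
      then show "mat 1 + (1 / (exp t)^2 - 1) *\<^sub>R M3 0 0 0 0 1 0 0 0 0 + (exp t - 1) *\<^sub>R M3 1 0 0 0 0 0 0 0 1 \<in> ?H"
        by auto
    qed
  qed (auto simp: mat1_M3)
  then show "{M3 1 0 0 0 (-2) 0 0 0 1} \<subseteq> lie_tangent ?H" by simp
  show "independent {M3 1 0 0 0 (-2) 0 0 0 1}" by (simp add: M3_zero)
qed simp


lemma lie_mono: "H \<subseteq> K \<Longrightarrow> lie_tangent H \<subseteq> lie_tangent K"
  unfolding lie_tangent_def by blast

lemma dim_Diag: "dim (lie_tangent Diag) = 2"
proof (rule dim_unique[of "{M3 1 0 0 0 (-1) 0 0 0 0, M3 1 0 0 0 1 0 0 0 (-2)}"])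
  let ?B = "{M3 1 0 0 0 (-1) 0 0 0 0, M3 1 0 0 0 1 0 0 0 (-2)}"
  show "card ?B = 2" by simp
  show "independent ?B"
    by (rule pairwise_orthogonal_independent) (auto simp: pairwise_insert orthogonal_def M3_zero)
  show "lie_tangent Diag \<subseteq> span ?B"
  proof
    fix X assume X: "X \<in> lie_tangent Diag"
    have z: "X$1$2 = 0" "X$1$3 = 0" "X$2$1 = 0" "X$2$3 = 0" "X$3$1 = 0" "X$3$2 = 0"
      by (rule comp_zero[OF X], auto simp: Diag_def)+
    have "X \<in> lie_tangent SL3" using X lie_mono[of Diag SL3] by (auto simp: Diag_def)
    then have tr: "X$1$1 + X$2$2 + X$3$3 = 0" by (rule SL3_trace)
    have "X = (X$1$1 + X$3$3/2) *\<^sub>R M3 1 0 0 0 (-1) 0 0 0 0 + (- X$3$3/2) *\<^sub>R M3 1 0 0 0 1 0 0 0 (-2)"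
      apply (subst M3_exp[of X]) using tr z by simp
    also have "\<dots> \<in> span ?B" by (intro span_add span_scale span_base) auto
    finally show "X \<in> span ?B" .
  qed
  have h1: "((\<lambda>t. exp t - 1) has_real_derivative 1) (at 0)" by (auto intro!: derivative_eq_intros)
  have h2: "((\<lambda>t. exp (-t) - 1) has_real_derivative -1) (at 0)" by (auto intro!: derivative_eq_intros)
  have h3: "((\<lambda>t. exp (-2*t) - 1) has_real_derivative -2) (at 0)" by (auto intro!: derivative_eq_intros)
  have d1: "M3 1 0 0 0 (-1) 0 0 0 0 \<in> lie_tangent Diag"
  proof (rule lie_I[of 1 "\<lambda>t. mat 1 + (exp t - 1) *\<^sub>R M3 1 0 0 0 0 0 0 0 0 + (exp (-t) - 1) *\<^sub>R M3 0 0 0 0 1 0 0 0 0"])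
    show "((\<lambda>t. mat 1 + (exp t - 1) *\<^sub>R M3 1 0 0 0 0 0 0 0 0 + (exp (-t) - 1) *\<^sub>R M3 0 0 0 0 1 0 0 0 0) has_vector_derivative M3 1 0 0 0 (-1) 0 0 0 0) (at 0)"
      using curve2[OF h1 h2, of "M3 1 0 0 0 0 0 0 0 0" "M3 0 0 0 0 1 0 0 0 0"] by simp
    show "\<forall>t. \<bar>t\<bar> < 1 \<longrightarrow> mat 1 + (exp t - 1) *\<^sub>R M3 1 0 0 0 0 0 0 0 0 + (exp (-t) - 1) *\<^sub>R M3 0 0 0 0 1 0 0 0 0 \<in> Diag"
      by (simp add: Diag_def SL3_def mat1_M3 exp_minus field_simps forall_3)
  qed (auto simp: mat1_M3)
  have d2: "M3 1 0 0 0 1 0 0 0 (-2) \<in> lie_tangent Diag"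
  proof (rule lie_I[of 1 "\<lambda>t. mat 1 + (exp t - 1) *\<^sub>R M3 1 0 0 0 1 0 0 0 0 + (exp (-2*t) - 1) *\<^sub>R M3 0 0 0 0 0 0 0 0 1"])
    show "((\<lambda>t. mat 1 + (exp t - 1) *\<^sub>R M3 1 0 0 0 1 0 0 0 0 + (exp (-2*t) - 1) *\<^sub>R M3 0 0 0 0 0 0 0 0 1) has_vector_derivative M3 1 0 0 0 1 0 0 0 (-2)) (at 0)"
      using curve2[OF h1 h3, of "M3 1 0 0 0 1 0 0 0 0" "M3 0 0 0 0 0 0 0 0 1"] by simp
    show "\<forall>t. \<bar>t\<bar> < 1 \<longrightarrow> mat 1 + (exp t - 1) *\<^sub>R M3 1 0 0 0 1 0 0 0 0 + (exp (-2*t) - 1) *\<^sub>R M3 0 0 0 0 0 0 0 0 1 \<in> Diag"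
      by (simp add: Diag_def SL3_def mat1_M3 exp_minus field_simps forall_3 flip: exp_add)
  qed (auto simp: mat1_M3)
  show "?B \<subseteq> lie_tangent Diag" using d1 d2 by simp
qed

lemma disj: "(y::real) \<in> {0,1} \<Longrightarrow> z \<in> {0,1} \<Longrightarrow> y' \<in> {0,1} \<Longrightarrow> z' \<in> {0,1} \<Longrightarrow> (y,z) \<noteq> (y',z') \<Longrightarrow>
  orbit (basept (nmat 0 y z)) \<inter> orbit (basept (nmat 0 y' z')) = {}"
proof (rule ccontr)
  assume h: "y \<in> {0,1}" "z \<in> {0,1}" "y' \<in> {0,1}" "z' \<in> {0,1}" "(y,z) \<noteq> (y',z')"
    "orbit (basept (nmat 0 y z)) \<inter> orbit (basept (nmat 0 y' z')) \<noteq> {}"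
  then obtain a d f where e: "a*d*f = 1" "a*y' = y*f" "d*z' = z*f" using orbit_meet by blast
  have "a \<noteq> 0" "d \<noteq> 0" "f \<noteq> 0" using e(1) by auto
  then show False using h(1-5) e(2,3) by auto
qed

theorem mainTheorem7:
  shows "(schubert w0 z2 = (orbit (basept (nmat 0 1 1)) \<union> orbit (basept (nmat 0 0 1))
            \<union> orbit (basept (nmat 0 1 0)) \<union> orbit (basept (nmat 0 0 0))) \<and>
     orbit (basept (nmat 0 1 1)) \<inter> orbit (basept (nmat 0 0 1)) = {} \<and>
     orbit (basept (nmat 0 1 1)) \<inter> orbit (basept (nmat 0 1 0)) = {} \<and>
     orbit (basept (nmat 0 1 1)) \<inter> orbit (basept (nmat 0 0 0)) = {} \<and>
     orbit (basept (nmat 0 0 1)) \<inter> orbit (basept (nmat 0 1 0)) = {} \<and>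
     orbit (basept (nmat 0 0 1)) \<inter> orbit (basept (nmat 0 0 0)) = {} \<and>
     orbit (basept (nmat 0 1 0)) \<inter> orbit (basept (nmat 0 0 0)) = {} \<and>
     orbit_dim (basept (nmat 0 1 1)) = 8 \<and>
     stab (basept (nmat 0 1 1)) = {mat 1} \<and>
     orbit_dim (basept (nmat 0 0 1)) = 7 \<and>
     stab (basept (nmat 0 0 1)) = {dmat (1 / a^2) a a | a. a \<noteq> 0} \<and>
     orbit_dim (basept (nmat 0 1 0)) = 7 \<and>
     stab (basept (nmat 0 1 0)) = {dmat a (1 / a^2) a | a. a \<noteq> 0} \<and>
     orbit_dim (basept (nmat 0 0 0)) = 6 \<and>
     stab (basept (nmat 0 0 0)) = Diag)"
  by (simp add: schubert_eq disj stab1 stab2 stab3 stab4 orbit_dim_def dim_SL3 dim_stab1 dim_stab2 dim_stab3 dim_Diag)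

end
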